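(* For $\delta\in\mathcal{D}^{LSL}$ the following two conditions are equivalent: (1) $\delta\ast\delta=\delta$; (2) there exists some $a\in[0,1]$ such that $\delta=u_a$, where $u_a(x)=x^2/a$ for $x\le a$ and $u_a(x)=x$ for $x>a$.
   Context: $\lambda$ is Lebesgue measure on $[0,1]$. Let $\mathcal{D}$ be the set of all functions $\delta:[0,1]\to[0,1]$ with $\delta(u)\le u$ for all $u$, $\delta(1)=1$, $\delta$ non-decreasing, and $|\delta(v)-\delta(u)|\le 2|v-u|$. Let $\mathcal{D}^{LSL}$ be the set of $\delta\in\mathcal{D}$ such that $x\mapsto\delta(x)/x$ is non-decreasing on $(0,1]$ and $x\mapsto\delta(x)/x^2$ is non-increasing on $(0,1]$. For $\delta_1,\delta_2\in\mathcal{D}^{LSL}$ the star product is $(\delta_1\ast\delta_2)(0):=0$ and $(\delta_1\ast\delta_2)(x):=\frac1x\delta_1(x)\delta_2(x)+x^2\int_{[x,1]}(\delta_1(u)/u)'(\delta_2(u)/u)'\,d\lambda(u)$ for $x\in(0,1]$. In the definition of $u_a$ the convention $0/0:=0$ is used (so $u_0(x)=x$ for all $x$). *)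

theory Defs
  imports "HOL-Analysis.Analysis"
begin

text \<open>The class D: functions on [0,1] (values outside [0,1] are irrelevant).\<close>
definition copD :: "(real \<Rightarrow> real) \<Rightarrow> bool" where
  "copD \<delta> \<longleftrightarrow>
     (\<forall>u\<in>{0..1}. \<delta> u \<in> {0..1}) \<and>
     (\<forall>u\<in>{0..1}. \<delta> u \<le> u) \<and>
     \<delta> 1 = 1 \<and>
     mono_on {0..1} \<delta> \<and>
     (\<forall>u\<in>{0..1}. \<forall>v\<in>{0..1}. \<bar>\<delta> v - \<delta> u\<bar> \<le> 2 * \<bar>v - u\<bar>)"

definition copD_LSL :: "(real \<Rightarrow> real) \<Rightarrow> bool" where
  "copD_LSL \<delta> \<longleftrightarrow> copD \<delta> \<and>
     (\<forall>x y. 0 < x \<and> x \<le> y \<and> y \<le> 1 \<longrightarrow> \<delta> x / x \<le> \<delta> y / y) \<and>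
     (\<forall>x y. 0 < x \<and> x \<le> y \<and> y \<le> 1 \<longrightarrow> \<delta> y / y\<^sup>2 \<le> \<delta> x / x\<^sup>2)"

text \<open>Star product; the derivative (delta(u)/u)' is the (a.e. existing) derivative,
  rendered via deriv; integration is w.r.t. Lebesgue measure on [x,1].\<close>
definition star :: "(real \<Rightarrow> real) \<Rightarrow> (real \<Rightarrow> real) \<Rightarrow> real \<Rightarrow> real" where
  "star \<delta>1 \<delta>2 x = (if x = 0 then 0 else
     (1 / x) * \<delta>1 x * \<delta>2 x +
     x\<^sup>2 * (LINT u:{x..1}|lebesgue.
        deriv (\<lambda>t. \<delta>1 t / t) u * deriv (\<lambda>t. \<delta>2 t / t) u))"

text \<open>u_a(x) = x^2/a for x \<le> a, x otherwise (with 0/0 = 0, so u_0(x) = x on [0,1]).\<close>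
definition ua :: "real \<Rightarrow> real \<Rightarrow> real" where
  "ua a x = (if x \<le> a then x\<^sup>2 / a else x)"

end

theory Submission
  imports Defs "HOL-Analysis.Analysis"
begin
lemma vitali_contract:
  fixes F :: "real \<Rightarrow> real" and E G :: "real set"
  assumes mono: "mono F" and cont: "continuous_on UNIV F"
    and uv: "0 < v" "v < u"
    and E: "\<And>x d. x \<in> E \<Longrightarrow> d > 0 \<Longrightarrow> \<exists>k. 0 < k \<and> k < d \<and> F (x + k) - F x > u * k"
    and E': "\<And>x d. x \<in> E \<Longrightarrow> d > 0 \<Longrightarrow> \<exists>k. 0 < k \<and> k < d \<and> F x - F (x - k) < v * k"
    and G: "open G"
  shows "\<exists>G' N. open G' \<and> negligible N \<and> E \<inter> G \<subseteq> G' \<union> N \<and>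
            emeasure lborel G' \<le> ennreal (v/u) * emeasure lborel G"
proof -
  define \<mu> where "\<mu> = interval_measure F"
  have monoF: "\<And>x y. x \<le> y \<Longrightarrow> F x \<le> F y" using mono by (simp add: mono_def)
  have muI: "emeasure \<mu> {a<..b} = ennreal (F b - F a)" if "a \<le> b" for a b
  proof -
    have "\<And>a. continuous (at_right a) F" using cont
      by (metis continuous_at_imp_continuous_at_within continuous_on_eq_continuous_at open_UNIV UNIV_I)
    then show ?thesis unfolding \<mu>_def using that monoF by (intro emeasure_interval_measure_Ioc) auto
  qed
  have sets_mu[simp]: "sets \<mu> = sets borel" unfolding \<mu>_def by simp
  define K1 where "K1 = {(c,r). 0 < r \<and> cball c r \<subseteq> G \<and> F (c + r) - F (c - r) < v * (2 * r)}"
  have cov1: "\<exists>i. i \<in> K1 \<and> x \<in> cball (fst i) (snd i) \<and> snd i < d" if xin: "x \<in> E \<inter> G" and dpos: "0 < d" for x d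
  proof -
    obtain e where e: "e > 0" "ball x e \<subseteq> G" using G xin by (meson IntD2 openE)
    obtain k where k: "0 < k" "k < min d e" "F x - F (x - k) < v * k"
      using E'[of x "min d e"] xin dpos e by auto
    have "cball (x - k/2) (k/2) \<subseteq> ball x e"
      using k by (auto simp: cball_eq_atLeastAtMost ball_eq_greaterThanLessThan)
    then have "(x - k/2, k/2) \<in> K1" using k e by (auto simp: K1_def)
    moreover have "x \<in> cball (x - k/2) (k/2)" using k by (auto simp: cball_eq_atLeastAtMost)
    ultimately show ?thesis using k by (intro exI[of _ "(x - k/2, k/2)"]) auto
  qed
  have r1: "\<And>i. i \<in> K1 \<Longrightarrow> 0 < snd i" by (auto simp: K1_def)
  obtain C1 where C1: "countable C1" "C1 \<subseteq> K1"
     "pairwise (\<lambda>i j. disjnt (cball (fst i) (snd i)) (cball (fst j) (snd j))) C1"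
     "negligible((E \<inter> G) - (\<Union>i \<in> C1. cball (fst i) (snd i)))"
    using Vitali_covering_theorem_cballs[of K1 snd "E \<inter> G" fst, OF r1 cov1] by blast
  define X where "X i = {fst i - snd i <.. fst i + snd i}" for i :: "real \<times> real"
  have Xsub: "X i \<subseteq> cball (fst i) (snd i)" for i by (auto simp: X_def cball_eq_atLeastAtMost)
  have disjX: "disjoint_family_on X C1"
    using C1(3) Xsub unfolding disjoint_family_on_def pairwise_def disjnt_def by blast
  define U where "U = (\<Union>i\<in>C1. X i)"
  have UO: "U \<subseteq> G"
  proof -
    { fix i assume "i \<in> C1"
      then have "i \<in> K1" using C1 by auto
      then have "cball (fst i) (snd i) \<subseteq> G" by (auto simp: K1_def split: prod.splits)
      with Xsub have "X i \<subseteq> G" by blast }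
    then show ?thesis by (auto simp: U_def)
  qed
  have XB[measurable]: "X i \<in> sets borel" for i by (simp add: X_def)
  have muU: "emeasure \<mu> U \<le> ennreal v * emeasure lborel U"
  proof -
    have "emeasure \<mu> U = (\<integral>\<^sup>+i. emeasure \<mu> (X i) \<partial>count_space C1)"
      unfolding U_def by (rule emeasure_UN_countable) (use C1 disjX in auto)
    also have "\<dots> \<le> (\<integral>\<^sup>+i. ennreal v * emeasure lborel (X i) \<partial>count_space C1)"
    proof (rule nn_integral_mono)
      fix i assume "i \<in> space (count_space C1)"
      then have i: "i \<in> K1" using C1 by auto
      then have "0 < snd i" "F (fst i + snd i) - F (fst i - snd i) < v * (2 * snd i)"
        by (auto simp: K1_def split: prod.splits)
      note lt = this
      have eq1: "emeasure \<mu> (X i) = ennreal (F (fst i + snd i) - F (fst i - snd i))"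
        unfolding X_def using lt by (intro muI) auto
      have eq2: "emeasure lborel (X i) = ennreal (2 * snd i)"
        unfolding X_def using lt by (subst emeasure_lborel_Ioc) (auto simp: algebra_simps)
      have eq3: "ennreal v * ennreal (2 * snd i) = ennreal (v * (2 * snd i))"
        by (rule ennreal_mult[symmetric]) (use uv lt in auto)
      have "ennreal (F (fst i + snd i) - F (fst i - snd i)) \<le> ennreal (v * (2 * snd i))"
        by (rule ennreal_leI) (use lt in linarith)
      then show "emeasure \<mu> (X i) \<le> ennreal v * emeasure lborel (X i)"
        unfolding eq1 eq2 eq3 .
    qed
    also have "\<dots> = ennreal v * (\<integral>\<^sup>+i. emeasure lborel (X i) \<partial>count_space C1)"
      by (rule nn_integral_cmult) auto
    also have "(\<integral>\<^sup>+i. emeasure lborel (X i) \<partial>count_space C1) = emeasure lborel U"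
      unfolding U_def by (rule emeasure_UN_countable[symmetric]) (use C1 disjX in auto)
    finally show ?thesis .
  qed
  define W where "W = (\<Union>i\<in>C1. ball (fst i) (snd i))"
  have openW: "open W" unfolding W_def by auto
  have WU: "W \<subseteq> U" unfolding W_def U_def X_def by (auto simp: ball_eq_greaterThanLessThan)
  define K2 where "K2 = {(c,r). 0 < r \<and> cball c r \<subseteq> W \<and> F (c + r) - F (c - r) > u * (2 * r)}"
  have cov2: "\<exists>i. i \<in> K2 \<and> x \<in> cball (fst i) (snd i) \<and> snd i < d" if xin: "x \<in> E \<inter> W" and dpos: "0 < d" for x d
  proof -
    obtain e where e: "e > 0" "ball x e \<subseteq> W" using openW xin by (meson IntD2 openE)
    obtain k where k: "0 < k" "k < min d e" "F (x + k) - F x > u * k"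
      using E[of x "min d e"] xin dpos e by auto
    have "cball (x + k/2) (k/2) \<subseteq> ball x e"
      using k by (auto simp: cball_eq_atLeastAtMost ball_eq_greaterThanLessThan)
    then have "(x + k/2, k/2) \<in> K2" using k e by (auto simp: K2_def add.commute)
    moreover have "x \<in> cball (x + k/2) (k/2)" using k by (auto simp: cball_eq_atLeastAtMost)
    ultimately show ?thesis using k by (intro exI[of _ "(x + k/2, k/2)"]) auto
  qed
  have r2: "\<And>i. i \<in> K2 \<Longrightarrow> 0 < snd i" by (auto simp: K2_def)
  obtain C2 where C2: "countable C2" "C2 \<subseteq> K2"
     "pairwise (\<lambda>i j. disjnt (cball (fst i) (snd i)) (cball (fst j) (snd j))) C2"
     "negligible((E \<inter> W) - (\<Union>i \<in> C2. cball (fst i) (snd i)))"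
    using Vitali_covering_theorem_cballs[of K2 snd "E \<inter> W" fst, OF r2 cov2] by blast
  have disjX2: "disjoint_family_on X C2"
    using C2(3) Xsub unfolding disjoint_family_on_def pairwise_def disjnt_def by blast
  define V where "V = (\<Union>i\<in>C2. X i)"
  have VW: "V \<subseteq> W"
  proof -
    { fix i assume "i \<in> C2"
      then have "i \<in> K2" using C2 by auto
      then have "cball (fst i) (snd i) \<subseteq> W" by (auto simp: K2_def split: prod.splits)
      with Xsub have "X i \<subseteq> W" by blast }
    then show ?thesis by (auto simp: V_def)
  qed
  have muV: "ennreal u * emeasure lborel V \<le> emeasure \<mu> V"
  proof -
    have "ennreal u * emeasure lborel V = ennreal u * (\<integral>\<^sup>+i. emeasure lborel (X i) \<partial>count_space C2)"
      unfolding V_def by (subst emeasure_UN_countable) (use C2 disjX2 in auto)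
    also have "\<dots> = (\<integral>\<^sup>+i. ennreal u * emeasure lborel (X i) \<partial>count_space C2)"
      by (rule nn_integral_cmult[symmetric]) auto
    also have "\<dots> \<le> (\<integral>\<^sup>+i. emeasure \<mu> (X i) \<partial>count_space C2)"
    proof (rule nn_integral_mono)
      fix i assume "i \<in> space (count_space C2)"
      then have i: "i \<in> K2" using C2 by auto
      then have "0 < snd i" "F (fst i + snd i) - F (fst i - snd i) > u * (2 * snd i)"
        by (auto simp: K2_def split: prod.splits)
      note lt = this
      have eq1: "emeasure \<mu> (X i) = ennreal (F (fst i + snd i) - F (fst i - snd i))"
        unfolding X_def using lt by (intro muI) auto
      have eq2: "emeasure lborel (X i) = ennreal (2 * snd i)"
        unfolding X_def using lt by (subst emeasure_lborel_Ioc) (auto simp: algebra_simps)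
      have eq3: "ennreal u * ennreal (2 * snd i) = ennreal (u * (2 * snd i))"
        by (rule ennreal_mult[symmetric]) (use uv lt in auto)
      have "ennreal (u * (2 * snd i)) \<le> ennreal (F (fst i + snd i) - F (fst i - snd i))"
        by (rule ennreal_leI) (use lt in linarith)
      then show "ennreal u * emeasure lborel (X i) \<le> emeasure \<mu> (X i)"
        unfolding eq1 eq2 eq3 .
    qed
    also have "\<dots> = emeasure \<mu> V"
      unfolding V_def by (rule emeasure_UN_countable[symmetric]) (use C2 disjX2 in auto)
    finally show ?thesis .
  qed
  have UB: "U \<in> sets borel" unfolding U_def using C1(1) by (intro sets.countable_UN'') auto
  have VB: "V \<in> sets borel" unfolding V_def using C2(1) by (intro sets.countable_UN'') auto
  have "emeasure \<mu> V \<le> emeasure \<mu> U"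
    using VW WU UB by (intro emeasure_mono) auto
  also have "\<dots> \<le> ennreal v * emeasure lborel U" by (rule muU)
  also have "\<dots> \<le> ennreal v * emeasure lborel G"
    using UO G by (intro mult_left_mono emeasure_mono) auto
  finally have uV: "ennreal u * emeasure lborel V \<le> ennreal v * emeasure lborel G"
    using muV by (rule order_trans[rotated])
  define G' where "G' = (\<Union>i\<in>C2. ball (fst i) (snd i))"
  have G'V: "G' \<subseteq> V" unfolding G'_def V_def X_def by (auto simp: ball_eq_greaterThanLessThan)
  have "emeasure lborel G' \<le> emeasure lborel V"
    using G'V VB by (intro emeasure_mono) auto
  also have "\<dots> = ennreal (1/u) * (ennreal u * emeasure lborel V)"
  proof -
    have "ennreal (1/u) * ennreal u = ennreal (1/u * u)"
      by (rule ennreal_mult[symmetric]) (use uv in auto)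
    also have "1/u * u = 1" using uv by simp
    finally have "ennreal (1/u) * ennreal u = 1" by (metis ennreal_1)
    then show ?thesis by (simp add: mult.assoc[symmetric])
  qed
  also have "\<dots> \<le> ennreal (1/u) * (ennreal v * emeasure lborel G)"
    using uV by (intro mult_left_mono) auto
  also have "\<dots> = ennreal (v/u) * emeasure lborel G"
  proof -
    have "ennreal (1/u) * ennreal v = ennreal (1/u * v)"
      by (rule ennreal_mult[symmetric]) (use uv in auto)
    moreover have "1/u * v = v/u" by simp
    ultimately have "ennreal (1/u) * ennreal v = ennreal (v/u)" by metis
    then show ?thesis by (simp add: mult.assoc[symmetric])
  qed
  finally have meas: "emeasure lborel G' \<le> ennreal (v/u) * emeasure lborel G" .
  define N where "N = ((E \<inter> G) - (\<Union>i \<in> C1. cball (fst i) (snd i))) \<union>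
     ((E \<inter> W) - (\<Union>i \<in> C2. cball (fst i) (snd i))) \<union>
     ((\<lambda>i. fst i - snd i) ` (C1 \<union> C2)) \<union> ((\<lambda>i. fst i + snd i) ` (C1 \<union> C2))"
  have negN: "negligible N"
  proof -
    have "countable ((\<lambda>i. fst i - snd i) ` (C1 \<union> C2) \<union> (\<lambda>i. fst i + snd i) ` (C1 \<union> C2))"
      using C1(1) C2(1) by auto
    then have "negligible ((\<lambda>i. fst i - snd i) ` (C1 \<union> C2) \<union> (\<lambda>i. fst i + snd i) ` (C1 \<union> C2))"
      by (metis countable_imp_null_set_lborel negligible_iff_null_sets null_sets_completionI)
    then show ?thesis unfolding N_def using C1(4) C2(4) by (simp add: Un_assoc)
  qed
  have cover: "E \<inter> G \<subseteq> G' \<union> N"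
  proof
    fix x assume x: "x \<in> E \<inter> G"
    show "x \<in> G' \<union> N"
    proof (cases "x \<in> N")
      case False
      then obtain i where i: "i \<in> C1" "x \<in> cball (fst i) (snd i)" using x unfolding N_def by blast
      have "x \<noteq> fst i - snd i" "x \<noteq> fst i + snd i" using False i unfolding N_def by auto
      then have "x \<in> ball (fst i) (snd i)" using i
        by (auto simp: cball_eq_atLeastAtMost ball_eq_greaterThanLessThan)
      then have "x \<in> E \<inter> W" using x i unfolding W_def by auto
      then obtain j where j: "j \<in> C2" "x \<in> cball (fst j) (snd j)" using False unfolding N_def by blast
      have "x \<noteq> fst j - snd j" "x \<noteq> fst j + snd j" using False j unfolding N_def by auto
      then have "x \<in> ball (fst j) (snd j)" using j
        by (auto simp: cball_eq_atLeastAtMost ball_eq_greaterThanLessThan)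
      then show ?thesis using j unfolding G'_def by auto
    qed auto
  qed
  have "open G'" unfolding G'_def by auto
  then show ?thesis using negN cover meas by blast
qed

lemma bad_negligible:
  fixes F :: "real \<Rightarrow> real"
  assumes mono: "mono F" and cont: "continuous_on UNIV F" and vu: "v < u"
  shows "negligible {x. (\<forall>d>0. \<exists>k. 0 < k \<and> k < d \<and> F (x + k) - F x > u * k) \<and>
                        (\<forall>d>0. \<exists>k. 0 < k \<and> k < d \<and> F x - F (x - k) < v * k)}" (is "negligible ?E")
proof (cases "v \<le> 0")
  case True
  have Eempty: "?E = {}"
  proof (safe)
    fix x assume "\<forall>d>0. \<exists>k. 0 < k \<and> k < d \<and> F x - F (x - k) < v * k"
    then obtain k where k: "0 < k" "F x - F (x - k) < v * k" using zero_less_one by blast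
    have "F (x - k) \<le> F x" using mono k by (simp add: mono_def)
    moreover have "v * k \<le> 0" using True k by (simp add: mult_nonpos_nonneg)
    ultimately show "x \<in> {}" using k by linarith
  qed
  show ?thesis by (simp only: Eempty negligible_empty)
next
  case False
  then have uv: "0 < v" "v < u" using vu by auto
  define E where "E = ?E"
  have E1: "\<And>x d. x \<in> E \<Longrightarrow> d > 0 \<Longrightarrow> \<exists>k. 0 < k \<and> k < d \<and> F (x + k) - F x > u * k"
    unfolding E_def by blast
  have E2: "\<And>x d. x \<in> E \<Longrightarrow> d > 0 \<Longrightarrow> \<exists>k. 0 < k \<and> k < d \<and> F x - F (x - k) < v * k"
    unfolding E_def by blast
  have main: "negligible (E \<inter> ball 0 m)" if m: "m > 0" for m :: real
  proof -
    have iter: "\<exists>G N. open G \<and> G \<in> lmeasurable \<and> negligible N \<and> E \<inter> ball 0 m \<subseteq> G \<union> N \<and>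
                  measure lebesgue G \<le> (v/u)^n * (2*m)" for n
    proof (induction n)
      case 0
      have "measure lebesgue (ball (0::real) m) = 2 * m"
        using m by (simp add: ball_eq_greaterThanLessThan)
      then show ?case
        by (intro exI[of _ "ball 0 m"] exI[of _ "{}"]) auto
    next
      case (Suc n)
      then obtain G N where GN: "open G" "G \<in> lmeasurable" "negligible N" "E \<inter> ball 0 m \<subseteq> G \<union> N"
        "measure lebesgue G \<le> (v/u)^n * (2*m)" by blast
      obtain G' N' where G'N': "open G'" "negligible N'" "E \<inter> G \<subseteq> G' \<union> N'"
        "emeasure lborel G' \<le> ennreal (v/u) * emeasure lborel G"
        using vitali_contract[OF mono cont uv E1 E2 GN(1)] by blast
      have Gb: "G \<in> sets borel" "G' \<in> sets borel" using GN(1) G'N'(1) by auto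
      have "emeasure lborel G = emeasure lebesgue G" using Gb by simp
      also have "\<dots> = ennreal (measure lebesgue G)" using GN(2) by (rule emeasure_eq_measure2)
      finally have "emeasure lborel G = ennreal (measure lebesgue G)" .
      then have "emeasure lborel G' \<le> ennreal (v/u) * ennreal (measure lebesgue G)"
        using G'N'(4) by simp
      also have "\<dots> = ennreal (v/u * measure lebesgue G)"
        by (rule ennreal_mult[symmetric]) (use uv in auto)
      finally have le: "emeasure lborel G' \<le> ennreal (v/u * measure lebesgue G)" .
      have lm: "G' \<in> lmeasurable"
        using le Gb by (intro fmeasurableI) (auto simp: le_less_trans)
      have "measure lebesgue G' \<le> v/u * measure lebesgue G"
      proof -
        have "emeasure lebesgue G' = ennreal (measure lebesgue G')"
          using lm by (simp add: emeasure_eq_measure2)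
        then have "ennreal (measure lebesgue G') \<le> ennreal (v/u * measure lebesgue G)"
          using le Gb by simp
        then show ?thesis using uv by (subst (asm) ennreal_le_iff) auto
      qed
      also have "\<dots> \<le> v/u * ((v/u)^n * (2*m))"
        by (rule mult_left_mono[OF GN(5)]) (use uv in simp)
      finally have "measure lebesgue G' \<le> (v/u)^Suc n * (2*m)" by simp
      moreover have "E \<inter> ball 0 m \<subseteq> G' \<union> (N \<union> N')" using GN(4) G'N'(3) by blast
      moreover have "negligible (N \<union> N')" using GN(3) G'N'(2) by simp
      ultimately show ?case using G'N'(1) lm by blast
    qed
    show ?thesis
      unfolding negligible_outer_le
    proof (intro allI impI)
      fix e :: real assume e: "e > 0"
      obtain n where n: "(v/u)^n < e / (2*m)"
        using real_arch_pow_inv[of "e/(2*m)" "v/u"] e m uv by auto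
      obtain G N where GN: "open G" "G \<in> lmeasurable" "negligible N" "E \<inter> ball 0 m \<subseteq> G \<union> N"
        "measure lebesgue G \<le> (v/u)^n * (2*m)" using iter[of n] by blast
      have Nm: "N \<in> lmeasurable" "measure lebesgue N = 0"
        using GN(3) negligible_imp_measurable negligible_imp_measure0 by auto
      have "measure lebesgue (G \<union> N) \<le> measure lebesgue G + measure lebesgue N"
        using GN(2) Nm by (intro measure_Un_le) auto
      also have "\<dots> \<le> (v/u)^n * (2*m)" using GN(5) Nm by simp
      also have "\<dots> \<le> e" using n m by (simp add: field_simps)
      finally show "\<exists>T. E \<inter> ball 0 m \<subseteq> T \<and> T \<in> lmeasurable \<and> measure lebesgue T \<le> e"
        using GN(2,4) Nm by (intro exI[of _ "G \<union> N"]) auto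
    qed
  qed
  have sub: "?E \<subseteq> (\<Union>n. ?E \<inter> ball 0 (real (Suc n)))"
  proof
    fix x assume x: "x \<in> ?E"
    obtain n where n: "\<bar>x\<bar> < real n" using reals_Archimedean2 by blast
    then have "x \<in> ball 0 (real (Suc n))" by (simp add: dist_real_def)
    with x show "x \<in> (\<Union>n. ?E \<inter> ball 0 (real (Suc n)))" by blast
  qed
  have "negligible (\<Union>n. E \<inter> ball 0 (real (Suc n)))"
    by (intro negligible_Union_nat main) auto
  then show ?thesis using sub unfolding E_def by (rule negligible_subset)
qed

lemma freq_right0: "(\<exists>\<^sub>F k in at_right (0::real). P k) \<longleftrightarrow> (\<forall>d>0. \<exists>k. 0 < k \<and> k < d \<and> P k)"
  unfolding frequently_def eventually_at_right_field by (metis not_less)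

lemma freq_left0: "(\<exists>\<^sub>F k in at_left (0::real). P k) \<longleftrightarrow> (\<forall>d>0. \<exists>k. 0 < k \<and> k < d \<and> P (- k))"
proof -
  have "(\<exists>b<0. \<forall>y>b. y < 0 \<longrightarrow> \<not> P y) \<longleftrightarrow> (\<exists>d>0. \<forall>k. 0 < k \<and> k < d \<longrightarrow> \<not> P (- k))"
  proof
    assume "\<exists>b<0. \<forall>y>b. y < 0 \<longrightarrow> \<not> P y"
    then obtain b where b: "b < 0" "\<forall>y>b. y < 0 \<longrightarrow> \<not> P y" by blast
    show "\<exists>d>0. \<forall>k. 0 < k \<and> k < d \<longrightarrow> \<not> P (- k)"
      by (rule exI[of _ "-b"]) (use b in auto)
  next
    assume "\<exists>d>0. \<forall>k. 0 < k \<and> k < d \<longrightarrow> \<not> P (- k)"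
    then obtain d where d: "d > 0" "\<forall>k. 0 < k \<and> k < d \<longrightarrow> \<not> P (- k)" by blast
    show "\<exists>b<0. \<forall>y>b. y < 0 \<longrightarrow> \<not> P y"
    proof (rule exI[of _ "-d"], intro conjI allI impI)
      fix y assume "y > - d" "y < 0"
      then show "\<not> P y" using d(2)[rule_format, of "-y"] by auto
    qed (use d in auto)
  qed
  then show ?thesis unfolding frequently_def eventually_at_left_field by blast
qed

definition bad1 :: "(real \<Rightarrow> real) \<Rightarrow> real \<Rightarrow> real \<Rightarrow> real set" where
  "bad1 F u v = {x. (\<forall>d>0. \<exists>k. 0 < k \<and> k < d \<and> F (x + k) - F x > u * k) \<and>
                        (\<forall>d>0. \<exists>k. 0 < k \<and> k < d \<and> F x - F (x - k) < v * k)}"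

definition bad2 :: "(real \<Rightarrow> real) \<Rightarrow> real \<Rightarrow> real \<Rightarrow> real set" where
  "bad2 F u v = {x. (\<forall>d>0. \<exists>k. 0 < k \<and> k < d \<and> F x - F (x - k) > u * k) \<and>
                        (\<forall>d>0. \<exists>k. 0 < k \<and> k < d \<and> F (x + k) - F x < v * k)}"

lemma bad1_negligible:
  assumes "mono F" "continuous_on UNIV F" "v < u"
  shows "negligible (bad1 F u v)"
  unfolding bad1_def by (rule bad_negligible[OF assms])

lemma bad2_negligible:
  fixes F :: "real \<Rightarrow> real"
  assumes mono: "mono F" and cont: "continuous_on UNIV F" and vu: "v < u"
  shows "negligible (bad2 F u v)"
proof -
  define G where "G t = - F (- t)" for t
  have "mono G" using mono unfolding G_def mono_def by auto
  moreover have "continuous_on UNIV G" unfolding G_def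
    by (intro continuous_intros continuous_on_compose2[OF cont]) auto
  ultimately have neg: "negligible (bad1 G u v)" using vu by (rule bad1_negligible)
  have "bad2 F u v = uminus ` bad1 G u v"
  proof -
    have "x \<in> bad2 F u v \<longleftrightarrow> - x \<in> bad1 G u v" for x
      unfolding bad1_def bad2_def G_def by (simp add: algebra_simps)
    then show ?thesis by (force simp: image_iff)
  qed
  moreover have "negligible (uminus ` bad1 G u v)"
    by (rule negligible_differentiable_image_negligible[OF _ neg])
       (auto intro!: derivative_intros simp: differentiable_on_def differentiable_def)
  ultimately show ?thesis by simp
qed

lemma mono_lip_differentiable_ae:
  fixes F :: "real \<Rightarrow> real"
  assumes mono: "mono F" and lip: "\<And>x y. \<bar>F x - F y\<bar> \<le> L * \<bar>x - y\<bar>"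
  shows "negligible {x. \<not> F differentiable (at x)}"
proof -
  have cont: "continuous_on UNIV F"
  proof (rule continuous_onI)
    fix x e :: real assume e: "0 < e" "x \<in> UNIV"
    show "\<exists>d>0. \<forall>x'\<in>UNIV. dist x' x < d \<longrightarrow> dist (F x') (F x) \<le> e"
    proof (cases "L \<le> 0")
      case True
      show ?thesis
      proof (intro exI[of _ 1] conjI ballI impI)
        fix x' :: real
        have "L * \<bar>x' - x\<bar> \<le> 0" using True by (simp add: mult_nonpos_nonneg)
        then show "dist (F x') (F x) \<le> e" using lip[of x' x] e by (simp add: dist_real_def)
      qed simp
    next
      case False
      show ?thesis
      proof (intro exI[of _ "e / L"] conjI ballI impI)
        show "0 < e / L" using False e by simp
        fix x' assume "dist x' x < e / L"
        then have "L * \<bar>x' - x\<bar> \<le> e" using False by (simp add: dist_real_def field_simps)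
        then show "dist (F x') (F x) \<le> e" using lip[of x' x] by (simp add: dist_real_def)
      qed
    qed
  qed
  define Bad where "Bad p = (if snd p < fst p then bad1 F (fst p) (snd p) \<union> bad2 F (fst p) (snd p) else {})"
    for p :: "real \<times> real"
  have negB: "negligible (\<Union>(Bad ` (\<rat> \<times> \<rat>)))"
  proof (rule negligible_countable_Union)
    show "countable (Bad ` (\<rat> \<times> \<rat>))" by (intro countable_image countable_SIGMA countable_rat)
  next
    fix S assume "S \<in> Bad ` (\<rat> \<times> \<rat>)"
    then obtain p where "S = Bad p" by blast
    then show "negligible S" unfolding Bad_def
      using bad1_negligible[OF mono cont] bad2_negligible[OF mono cont] by auto
  qed
  have diff: "F differentiable (at x)" if x: "x \<notin> \<Union>(Bad ` (\<rat> \<times> \<rat>))" for x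
  proof -
    have nb1: "x \<notin> bad1 F u v" if "u \<in> \<rat>" "v \<in> \<rat>" "v < u" for u v
      using x that unfolding Bad_def by force
    have nb2: "x \<notin> bad2 F u v" if "u \<in> \<rat>" "v \<in> \<rat>" "v < u" for u v
      using x that unfolding Bad_def by force
    define Q where "Q k = (F (x + k) - F x) / k" for k
    have Qr: "Q k = (F (x + k) - F x) / k" for k by (simp add: Q_def)
    have Ql: "Q (- k) = (F x - F (x - k)) / k" for k
      by (simp add: Q_def divide_simps)
    have Q0: "0 \<le> Q k" for k
    proof (cases "k \<ge> 0")
      case True then have "F x \<le> F (x + k)" using mono by (simp add: mono_def)
      then show ?thesis using True by (simp add: Q_def)
    next
      case False then have "F (x + k) \<le> F x" using mono by (simp add: mono_def)
      then show ?thesis using False by (simp add: Q_def divide_nonpos_neg)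
    qed
    have QL: "Q k \<le> L" if "k \<noteq> 0" for k
    proof -
      have "\<bar>F (x + k) - F x\<bar> \<le> L * \<bar>k\<bar>" using lip[of "x + k" x] by simp
      then have "\<bar>Q k\<bar> \<le> L" using that by (simp add: Q_def abs_divide divide_le_eq)
      then show ?thesis by simp
    qed
    have Rup: "(\<exists>\<^sub>F k in at_right 0. Q k > c) \<longleftrightarrow> (\<forall>d>0. \<exists>k. 0 < k \<and> k < d \<and> F (x + k) - F x > c * k)" for c
      unfolding freq_right0 Qr by (intro all_cong ex_cong1) (auto simp: field_simps)
    have Rlo: "(\<exists>\<^sub>F k in at_right 0. Q k < c) \<longleftrightarrow> (\<forall>d>0. \<exists>k. 0 < k \<and> k < d \<and> F (x + k) - F x < c * k)" for c
      unfolding freq_right0 Qr by (intro all_cong ex_cong1) (auto simp: field_simps)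
    have Lup: "(\<exists>\<^sub>F k in at_left 0. Q k > c) \<longleftrightarrow> (\<forall>d>0. \<exists>k. 0 < k \<and> k < d \<and> F x - F (x - k) > c * k)" for c
      unfolding freq_left0 Ql by (intro all_cong ex_cong1) (auto simp: field_simps)
    have Llo: "(\<exists>\<^sub>F k in at_left 0. Q k < c) \<longleftrightarrow> (\<forall>d>0. \<exists>k. 0 < k \<and> k < d \<and> F x - F (x - k) < c * k)" for c
      unfolding freq_left0 Ql by (intro all_cong ex_cong1) (auto simp: field_simps)
    have no1: "\<not> ((\<exists>\<^sub>F k in at_right 0. Q k > u) \<and> (\<exists>\<^sub>F k in at_left 0. Q k < v))"
      if "u \<in> \<rat>" "v \<in> \<rat>" "v < u" for u v
      using nb1[OF that] unfolding Rup Llo bad1_def by blast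
    have no2: "\<not> ((\<exists>\<^sub>F k in at_left 0. Q k > u) \<and> (\<exists>\<^sub>F k in at_right 0. Q k < v))"
      if "u \<in> \<rat>" "v \<in> \<rat>" "v < u" for u v
      using nb2[OF that] unfolding Lup Rlo bad2_def by blast
    have C: "eventually (\<lambda>k. p \<le> Q k) (at 0) \<or> eventually (\<lambda>k. Q k \<le> q) (at 0)"
      if pq: "p \<in> \<rat>" "q \<in> \<rat>" "p < q" for p q
    proof (rule ccontr)
      assume "\<not> ?thesis"
      then have A: "(\<exists>\<^sub>F k in at_right 0. Q k < p) \<or> (\<exists>\<^sub>F k in at_left 0. Q k < p)"
        and B: "(\<exists>\<^sub>F k in at_right 0. Q k > q) \<or> (\<exists>\<^sub>F k in at_left 0. Q k > q)"
        unfolding eventually_at_split frequently_def by (auto simp: not_le not_less)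
      obtain r where r: "r \<in> \<rat>" "p < r" "r < q" using Rats_dense_in_real[OF pq(3)] by blast
      obtain r' where r': "r' \<in> \<rat>" "p < r'" "r' < r" using Rats_dense_in_real[OF r(2)] by blast
      show False
      proof (cases "\<exists>\<^sub>F k in at_right 0. Q k > q")
        case B1: True
        show False
        proof (cases "\<exists>\<^sub>F k in at_left 0. Q k < r")
          case True then show False using no1[OF pq(2) r(1) r(3)] B1 by blast
        next
          case False
          then have ev: "eventually (\<lambda>k. Q k \<ge> r) (at_left 0)" unfolding frequently_def by (simp add: not_less)
          have "eventually (\<lambda>k. Q k > r') (at_left 0)" using ev by eventually_elim (use r' in auto)
          then have up: "\<exists>\<^sub>F k in at_left 0. Q k > r'" by (simp add: eventually_frequently)
          show False
          proof (cases "\<exists>\<^sub>F k in at_right 0. Q k < p")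
            case True then show False using no2[OF r'(1) pq(1) r'(2)] up by blast
          next
            case False
            then have "\<exists>\<^sub>F k in at_left 0. Q k < p" using A by blast
            then show False using no1[OF pq(2) pq(1) pq(3)] B1 by blast
          qed
        qed
      next
        case B2': False
        then have B2: "\<exists>\<^sub>F k in at_left 0. Q k > q" using B by blast
        show False
        proof (cases "\<exists>\<^sub>F k in at_right 0. Q k < r")
          case True then show False using no2[OF pq(2) r(1) r(3)] B2 by blast
        next
          case False
          then have ev: "eventually (\<lambda>k. Q k \<ge> r) (at_right 0)" unfolding frequently_def by (simp add: not_less)
          have "eventually (\<lambda>k. Q k > r') (at_right 0)" using ev by eventually_elim (use r' in auto)
          then have up: "\<exists>\<^sub>F k in at_right 0. Q k > r'" by (simp add: eventually_frequently)
          show False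
          proof (cases "\<exists>\<^sub>F k in at_left 0. Q k < p")
            case True then show False using no1[OF r'(1) pq(1) r'(2)] up by blast
          next
            case False
            then have "\<exists>\<^sub>F k in at_right 0. Q k < p" using A by blast
            then show False using no2[OF pq(2) pq(1) pq(3)] B2 by blast
          qed
        qed
      qed
    qed
    define A where "A = {p. p \<in> \<rat> \<and> eventually (\<lambda>k. p \<le> Q k) (at 0)}"
    have evnz: "eventually (\<lambda>k. k \<noteq> 0) (at (0::real))" by (simp add: eventually_at_filter)
    have A1: "-1 \<in> A" unfolding A_def
      using evnz by (auto elim!: eventually_mono intro: order_trans[OF _ Q0])
    have Abdd: "p \<le> L" if "p \<in> A" for p
    proof (rule ccontr)
      assume "\<not> p \<le> L"
      have "eventually (\<lambda>k. p \<le> Q k) (at 0)" using that by (simp add: A_def)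
      then have "eventually (\<lambda>k. False) (at (0::real))"
        using evnz by eventually_elim (use QL \<open>\<not> p \<le> L\<close> in force)
      then show False by simp
    qed
    have bdd: "bdd_above A" using Abdd by (auto simp: bdd_above_def)
    define s where "s = Sup A"
    have "(Q \<longlongrightarrow> s) (at 0)"
    proof (rule order_tendstoI)
      fix a assume "a < s"
      then obtain p where p: "p \<in> A" "a < p" using less_cSup_iff[of A a] A1 bdd unfolding s_def by blast
      then have "eventually (\<lambda>k. p \<le> Q k) (at 0)" by (simp add: A_def)
      then show "eventually (\<lambda>k. a < Q k) (at 0)" by eventually_elim (use p in auto)
    next
      fix a assume "s < a"
      obtain p' where p': "p' \<in> \<rat>" "s < p'" "p' < a" using Rats_dense_in_real[OF \<open>s < a\<close>] by blast
      obtain q where q: "q \<in> \<rat>" "p' < q" "q < a" using Rats_dense_in_real[OF p'(3)] by blast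
      have "p' \<notin> A" using p'(2) cSup_upper[OF _ bdd] unfolding s_def by force
      then have "\<not> eventually (\<lambda>k. p' \<le> Q k) (at 0)" using p'(1) by (simp add: A_def)
      then have "eventually (\<lambda>k. Q k \<le> q) (at 0)" using C[OF p'(1) q(1) q(2)] by blast
      then show "eventually (\<lambda>k. Q k < a) (at 0)" by eventually_elim (use q in auto)
    qed
    then have "(F has_field_derivative s) (at x)" unfolding DERIV_def Q_def .
    then show ?thesis unfolding real_differentiable_def by blast
  qed
  have "{x. \<not> F differentiable (at x)} \<subseteq> \<Union>(Bad ` (\<rat> \<times> \<rat>))" using diff by blast
  then show ?thesis using negB negligible_subset by blast
qed

lemma lip_continuous_on:
  fixes f :: "real \<Rightarrow> real"
  assumes lip: "\<And>x y. \<bar>f x - f y\<bar> \<le> L * \<bar>x - y\<bar>"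
  shows "continuous_on UNIV f"
proof (rule continuous_onI)
  fix x e :: real assume e: "0 < e" "x \<in> UNIV"
  show "\<exists>d>0. \<forall>x'\<in>UNIV. dist x' x < d \<longrightarrow> dist (f x') (f x) \<le> e"
  proof (cases "L \<le> 0")
    case True
    show ?thesis
    proof (intro exI[of _ 1] conjI ballI impI)
      fix x' :: real
      have "L * \<bar>x' - x\<bar> \<le> 0" using True by (simp add: mult_nonpos_nonneg)
      then show "dist (f x') (f x) \<le> e" using lip[of x' x] e by (simp add: dist_real_def)
    qed simp
  next
    case False
    show ?thesis
    proof (intro exI[of _ "e / L"] conjI ballI impI)
      show "0 < e / L" using False e by simp
      fix x' assume "dist x' x < e / L"
      then have "L * \<bar>x' - x\<bar> \<le> e" using False by (simp add: dist_real_def field_simps)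
      then show "dist (f x') (f x) \<le> e" using lip[of x' x] by (simp add: dist_real_def)
    qed
  qed
qed

lemma ftc_lipschitz:
  fixes F :: "real \<Rightarrow> real"
  assumes ab: "a \<le> b" and L: "0 \<le> L"
    and lip: "\<And>s t. s \<in> {a..b} \<Longrightarrow> t \<in> {a..b} \<Longrightarrow> \<bar>F s - F t\<bar> \<le> L * \<bar>s - t\<bar>"
    and neg: "negligible N"
    and diff: "\<And>t. t \<in> {a<..<b} \<Longrightarrow> t \<notin> N \<Longrightarrow> F differentiable (at t)"
  shows "(deriv F has_integral (F b - F a)) {a..b}"
proof -
  define c where "c t = max a (min b t)" for t
  define Ft where "Ft t = F (c t)" for t
  have c_in: "c t \<in> {a..b}" for t using ab by (auto simp: c_def)
  have c_lip: "\<bar>c s - c t\<bar> \<le> \<bar>s - t\<bar>" for s t by (auto simp: c_def)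
  have Ft_lip: "\<bar>Ft s - Ft t\<bar> \<le> L * \<bar>s - t\<bar>" for s t
  proof -
    have "\<bar>Ft s - Ft t\<bar> \<le> L * \<bar>c s - c t\<bar>" unfolding Ft_def by (rule lip[OF c_in c_in])
    also have "\<dots> \<le> L * \<bar>s - t\<bar>" by (rule mult_left_mono[OF c_lip L])
    finally show ?thesis .
  qed
  have Ft_eq: "Ft t = F t" if "t \<in> {a..b}" for t using that by (simp add: Ft_def c_def)
  have cont: "continuous_on UNIV Ft" by (rule lip_continuous_on[OF Ft_lip])
  define G where "G s = integral {a-1..s} Ft" for s
  have Gd: "(G has_real_derivative Ft t) (at t)" if "a - 1 < t" "t < b + 2" for t
  proof -
    have "((\<lambda>x. integral {a-1..x} Ft) has_real_derivative Ft t) (at t within {a-1..b+2})"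
      by (rule integral_has_real_derivative) (use cont that in \<open>auto intro: continuous_on_subset\<close>)
    moreover have "G = (\<lambda>x. integral {a-1..x} Ft)" by (simp add: fun_eq_iff G_def)
    ultimately show ?thesis using at_within_Icc_at[OF that] by simp
  qed
  define h where "h n = inverse (real (Suc n))" for n :: nat
  have h_pos: "0 < h n" for n by (simp add: h_def)
  have h_le: "h n \<le> 1" for n unfolding h_def by (simp add: inverse_le_1_iff)
  have h_lim: "filterlim h (at 0) sequentially"
  proof -
    have h_eq: "h = (\<lambda>n. inverse (real (Suc n)))" by (simp add: fun_eq_iff h_def)
    show ?thesis unfolding filterlim_at h_eq using LIMSEQ_inverse_real_of_nat
      by (auto intro: always_eventually)
  qed
  define q where "q n t = (Ft (t + h n) - Ft t) * inverse (h n)" for n t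
  have q_eq: "q n = (\<lambda>t. (Ft (t + h n) - Ft t) * inverse (h n))" for n by (simp add: fun_eq_iff q_def)
  have int_shift: "((\<lambda>t. Ft (t + z)) has_integral (G (b + z) - G (a + z))) {a..b}" if "0 \<le> z" "z \<le> 1" for z
  proof -
    have "((\<lambda>t. G (t + z)) has_vector_derivative Ft (x + z)) (at x within {a..b})" if "x \<in> {a..b}" for x
    proof -
      have "(G has_real_derivative Ft (x + z)) (at (x + z))"
        by (rule Gd) (use that \<open>0 \<le> z\<close> \<open>z \<le> 1\<close> in auto)
      then have "((\<lambda>t. G (t + z)) has_real_derivative Ft (x + z)) (at x)" by (simp add: DERIV_shift)
      then show ?thesis
        by (simp add: has_real_derivative_iff_has_vector_derivative has_vector_derivative_at_within)
    qed
    then show ?thesis using fundamental_theorem_of_calculus[OF ab, of "\<lambda>t. G (t + z)" "\<lambda>t. Ft (t + z)"]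
      by simp
  qed
  have q_int: "(q n has_integral ((G (b + h n) - G b) / h n - (G (a + h n) - G a) / h n)) {a..b}" for n
  proof -
    have "((\<lambda>t. (Ft (t + h n) - Ft (t + 0)) * inverse (h n)) has_integral
            (((G (b + h n) - G (a + h n)) - (G (b + 0) - G (a + 0))) * inverse (h n))) {a..b}"
      by (intro has_integral_mult_left has_integral_diff int_shift) (use h_pos h_le in \<open>auto intro: less_imp_le\<close>)
    moreover have "((G (b + h n) - G (a + h n)) - (G (b + 0) - G (a + 0))) * inverse (h n)
        = (G (b + h n) - G b) / h n - (G (a + h n) - G a) / h n"
      by (simp add: divide_inverse algebra_simps)
    ultimately show ?thesis by (simp add: q_eq)
  qed
  have dlim: "(\<lambda>n. (G (t + h n) - G t) / h n) \<longlonglongrightarrow> Ft t" if "a - 1 < t" "t < b + 2" for t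
  proof -
    have "((\<lambda>k. (G (t + k) - G t) / k) \<longlongrightarrow> Ft t) (at 0)"
      using Gd[OF that] by (simp add: DERIV_def)
    from filterlim_compose[OF this h_lim] show ?thesis .
  qed
  have lim1: "(\<lambda>n. integral {a..b} (q n)) \<longlonglongrightarrow> F b - F a"
  proof -
    have "(\<lambda>n. (G (b + h n) - G b) / h n - (G (a + h n) - G a) / h n) \<longlonglongrightarrow> Ft b - Ft a"
      by (intro tendsto_diff dlim) (use ab in auto)
    moreover have "Ft b - Ft a = F b - F a" using ab by (simp add: Ft_eq)
    moreover have "integral {a..b} (q n) = (G (b + h n) - G b) / h n - (G (a + h n) - G a) / h n" for n
      using q_int[of n] by (rule integral_unique)
    ultimately show ?thesis by simp
  qed
  define S where "S = {a<..<b} - N"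
  have negS: "negligible ({a..b} - S)"
  proof -
    have "{a..b} - S \<subseteq> {a, b} \<union> N" by (auto simp: S_def)
    moreover have "negligible ({a, b} \<union> N)" using neg by simp
    ultimately show ?thesis by (rule negligible_subset[rotated])
  qed
  have SI: "S \<subseteq> {a..b}" by (auto simp: S_def)
  have spike: "negligible {x \<in> {a..b} - S. f x \<noteq> 0}" "negligible {x \<in> S - {a..b}. f x \<noteq> 0}" for f :: "real \<Rightarrow> real"
  proof -
    show "negligible {x \<in> {a..b} - S. f x \<noteq> 0}" by (rule negligible_subset[OF negS]) auto
    have "{x \<in> S - {a..b}. f x \<noteq> 0} = {}" using SI by blast
    then show "negligible {x \<in> S - {a..b}. f x \<noteq> 0}" by (simp only: negligible_empty)
  qed
  have qS: "q n integrable_on S" for n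
    using integrable_spike_set[OF has_integral_integrable[OF q_int] spike] .
  have LS: "(\<lambda>_. L) integrable_on S"
    using integrable_spike_set[OF integrable_const_ivl spike] .
  have qb: "norm (q n t) \<le> L" for n t
  proof -
    have "\<bar>Ft (t + h n) - Ft t\<bar> \<le> L * h n" using Ft_lip[of "t + h n" t] h_pos[of n] by simp
    then show ?thesis using h_pos[of n] by (simp add: q_def abs_mult field_simps)
  qed
  have qlim: "(\<lambda>n. q n t) \<longlonglongrightarrow> deriv F t" if t: "t \<in> S" for t
  proof -
    have tt: "t \<in> {a<..<b}" "t \<notin> N" using t by (auto simp: S_def)
    have "(F has_real_derivative deriv F t) (at t)"
      using diff[OF tt] by (simp add: DERIV_deriv_iff_real_differentiable)
    then have "(Ft has_real_derivative deriv F t) (at t)"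
      by (rule has_field_derivative_transform_within_open[of _ _ _ "{a<..<b}"])
         (use tt in \<open>auto simp: Ft_eq\<close>)
    then have "((\<lambda>k. (Ft (t + k) - Ft t) / k) \<longlongrightarrow> deriv F t) (at 0)" by (simp add: DERIV_def)
    from filterlim_compose[OF this h_lim] show ?thesis by (simp add: q_def divide_inverse)
  qed
  have dc: "deriv F integrable_on S" "(\<lambda>n. integral S (q n)) \<longlonglongrightarrow> integral S (deriv F)"
    using dominated_convergence[OF qS LS qb qlim] by auto
  have "integral S (q n) = integral {a..b} (q n)" for n
    by (rule integral_spike_set) (use spike in auto)
  then have "(\<lambda>n. integral {a..b} (q n)) \<longlonglongrightarrow> integral S (deriv F)" using dc(2) by simp
  then have "integral S (deriv F) = F b - F a" using lim1 by (rule LIMSEQ_unique)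
  then have "(deriv F has_integral (F b - F a)) S" using dc(1) by (metis has_integral_integrable_integral)
  then show ?thesis using has_integral_spike_set_eq[OF spike(2) spike(1)] by blast
qed

lemma lip_mul:
  fixes f h :: "real \<Rightarrow> real"
  assumes "\<bar>f s - f t\<bar> \<le> A * \<bar>s - t\<bar>" "\<bar>h s - h t\<bar> \<le> B * \<bar>s - t\<bar>"
    "\<bar>f s\<bar> \<le> M" "\<bar>h t\<bar> \<le> M'" "0 \<le> M" "0 \<le> M'"
  shows "\<bar>f s * h s - f t * h t\<bar> \<le> (M * B + A * M') * \<bar>s - t\<bar>"
proof -
  have "f s * h s - f t * h t = f s * (h s - h t) + (f s - f t) * h t" by (simp add: algebra_simps)
  then have "\<bar>f s * h s - f t * h t\<bar> \<le> \<bar>f s\<bar> * \<bar>h s - h t\<bar> + \<bar>f s - f t\<bar> * \<bar>h t\<bar>"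
    by (simp add: abs_mult[symmetric] abs_triangle_ineq)
  also have "\<dots> \<le> M * (B * \<bar>s - t\<bar>) + (A * \<bar>s - t\<bar>) * M'"
    using assms by (intro add_mono mult_mono) auto
  finally show ?thesis by (simp add: algebra_simps)
qed

lemma lip_inverse:
  fixes x s t :: real
  assumes "0 < x" "x \<le> s" "x \<le> t"
  shows "\<bar>1 / s - 1 / t\<bar> \<le> (1 / x\<^sup>2) * \<bar>s - t\<bar>"
proof -
  have "1 / s - 1 / t = (t - s) / (s * t)" using assms by (simp add: field_simps)
  then have "\<bar>1 / s - 1 / t\<bar> = \<bar>s - t\<bar> / (s * t)" using assms by (simp add: abs_minus_commute)
  also have "\<dots> \<le> \<bar>s - t\<bar> / x\<^sup>2"
    using assms by (intro divide_left_mono) (auto simp: power2_eq_square intro: mult_mono)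
  finally show ?thesis by simp
qed

definition gg :: "(real \<Rightarrow> real) \<Rightarrow> real \<Rightarrow> real" where "gg \<delta> t = \<delta> t / t"
definition ggc :: "(real \<Rightarrow> real) \<Rightarrow> real \<Rightarrow> real \<Rightarrow> real" where "ggc \<delta> e t = gg \<delta> (max e (min 1 t))"

context
  fixes \<delta> :: "real \<Rightarrow> real"
  assumes lsl: "copD_LSL \<delta>"
begin


lemma d_nonneg: "u \<in> {0..1} \<Longrightarrow> 0 \<le> \<delta> u"
  using lsl unfolding copD_LSL_def copD_def by auto

lemma d_le: "u \<in> {0..1} \<Longrightarrow> \<delta> u \<le> u"
  using lsl unfolding copD_LSL_def copD_def by auto

lemma d_one: "\<delta> 1 = 1"
  using lsl unfolding copD_LSL_def copD_def by auto

lemma d_zero: "\<delta> 0 = 0"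
  using d_nonneg[of 0] d_le[of 0] by auto

lemma gg_mono: "0 < s \<Longrightarrow> s \<le> t \<Longrightarrow> t \<le> 1 \<Longrightarrow> gg \<delta> s \<le> gg \<delta> t"
  using lsl unfolding copD_LSL_def gg_def by blast

lemma gg_anti: "0 < s \<Longrightarrow> s \<le> t \<Longrightarrow> t \<le> 1 \<Longrightarrow> gg \<delta> t / t \<le> gg \<delta> s / s"
proof -
  assume a: "0 < s" "s \<le> t" "t \<le> 1"
  then have "\<delta> t / t\<^sup>2 \<le> \<delta> s / s\<^sup>2" using lsl unfolding copD_LSL_def by blast
  then show ?thesis by (simp add: gg_def power2_eq_square)
qed

lemma gg_one: "gg \<delta> 1 = 1" by (simp add: gg_def d_one)

lemma gg_ge: "0 < t \<Longrightarrow> t \<le> 1 \<Longrightarrow> t \<le> gg \<delta> t"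
proof -
  assume t: "0 < t" "t \<le> 1"
  have "gg \<delta> 1 / 1 \<le> gg \<delta> t / t" using gg_anti[OF t(1) t(2)] by simp
  then have "1 \<le> gg \<delta> t / t" by (simp add: gg_one)
  then show ?thesis using t by (simp add: field_simps)
qed

lemma gg_le1: "0 < t \<Longrightarrow> t \<le> 1 \<Longrightarrow> gg \<delta> t \<le> 1"
  using d_le[of t] by (simp add: gg_def)

lemma gg_pos: "0 < t \<Longrightarrow> t \<le> 1 \<Longrightarrow> 0 < gg \<delta> t"
  using gg_ge[of t] by linarith

lemma gg_lip_le: "0 < e \<Longrightarrow> e \<le> s \<Longrightarrow> s \<le> t \<Longrightarrow> t \<le> 1 \<Longrightarrow> \<bar>gg \<delta> s - gg \<delta> t\<bar> \<le> (1/e) * \<bar>s - t\<bar>"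
proof -
  assume a: "0 < e" "e \<le> s" "s \<le> t" "t \<le> 1"
  have s0: "0 < s" using a by linarith
  have "gg \<delta> t / t \<le> gg \<delta> s / s" using gg_anti[OF s0 a(3) a(4)] .
  then have "gg \<delta> t \<le> gg \<delta> s * t / s" using s0 a by (simp add: field_simps)
  then have "gg \<delta> t - gg \<delta> s \<le> gg \<delta> s * (t - s) / s" using s0 by (simp add: field_simps)
  also have "\<dots> \<le> 1 * (t - s) / s"
    using gg_le1[of s] s0 a by (intro divide_right_mono mult_right_mono) auto
  also have "\<dots> \<le> (t - s) / e" using a s0 by (simp add: frac_le)
  finally have "gg \<delta> t - gg \<delta> s \<le> (t - s) / e" .
  moreover have "gg \<delta> s \<le> gg \<delta> t" using gg_mono[OF s0 a(3) a(4)] .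
  ultimately show ?thesis using a by (simp add: abs_if field_simps)
qed

lemma gg_lip: "0 < e \<Longrightarrow> s \<in> {e..1} \<Longrightarrow> t \<in> {e..1} \<Longrightarrow> \<bar>gg \<delta> s - gg \<delta> t\<bar> \<le> (1/e) * \<bar>s - t\<bar>"
  using gg_lip_le[of e s t] gg_lip_le[of e t s] by (cases "s \<le> t") (auto simp: abs_minus_commute)


lemma ggc_mono: "0 < e \<Longrightarrow> e \<le> 1 \<Longrightarrow> mono (ggc \<delta> e)"
  unfolding mono_def ggc_def by (auto intro!: gg_mono)

lemma ggc_lip: "0 < e \<Longrightarrow> e \<le> 1 \<Longrightarrow> \<bar>ggc \<delta> e s - ggc \<delta> e t\<bar> \<le> (1/e) * \<bar>s - t\<bar>"
proof -
  assume e: "0 < e" "e \<le> 1"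
  have "\<bar>ggc \<delta> e s - ggc \<delta> e t\<bar> \<le> (1/e) * \<bar>max e (min 1 s) - max e (min 1 t)\<bar>"
    unfolding ggc_def using e by (intro gg_lip) auto
  also have "\<dots> \<le> (1/e) * \<bar>s - t\<bar>" using e by (intro mult_left_mono) auto
  finally show ?thesis .
qed

lemma gg_cont: "0 < e \<Longrightarrow> e \<le> 1 \<Longrightarrow> continuous_on {e..1} (gg \<delta>)"
proof -
  assume e: "0 < e" "e \<le> 1"
  have "continuous_on {e..1} (ggc \<delta> e)"
    using lip_continuous_on[OF ggc_lip[OF e]] continuous_on_subset by blast
  moreover have "\<And>t. t \<in> {e..1} \<Longrightarrow> ggc \<delta> e t = gg \<delta> t" by (simp add: ggc_def)
  ultimately show ?thesis using continuous_on_cong by blast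
qed

lemma gg_diff_ae: "0 < e \<Longrightarrow> e \<le> 1 \<Longrightarrow> \<exists>N. negligible N \<and> (\<forall>t. t \<in> {e<..<1} \<longrightarrow> t \<notin> N \<longrightarrow> gg \<delta> differentiable (at t))"
proof -
  assume e: "0 < e" "e \<le> 1"
  define N where "N = {x. \<not> ggc \<delta> e differentiable (at x)}"
  have "negligible N" unfolding N_def by (rule mono_lip_differentiable_ae[OF ggc_mono[OF e] ggc_lip[OF e]])
  moreover have "gg \<delta> differentiable (at t)" if t: "t \<in> {e<..<1}" "t \<notin> N" for t
  proof -
    have "ggc \<delta> e differentiable (at t)" using t by (simp add: N_def)
    then obtain D where "(ggc \<delta> e has_real_derivative D) (at t)" using real_differentiable_def by blast
    then have "(gg \<delta> has_real_derivative D) (at t)"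
      by (rule has_field_derivative_transform_within_open[of _ _ _ "{e<..<1}"]) (use t in \<open>auto simp: ggc_def\<close>)
    then show ?thesis using real_differentiable_def by blast
  qed
  ultimately show ?thesis by blast
qed

end

lemma deriv_nonneg_of_mono:
  fixes f :: "real \<Rightarrow> real"
  assumes d: "(f has_real_derivative D) (at t)" and t: "0 < t" "t < 1"
    and mono: "\<And>s u. 0 < s \<Longrightarrow> s \<le> u \<Longrightarrow> u \<le> 1 \<Longrightarrow> f s \<le> f u"
  shows "0 \<le> D"
proof (rule ccontr)
  assume "\<not> 0 \<le> D"
  then obtain e where e: "e > 0" "\<forall>h>0. h < e \<longrightarrow> f t > f (t + h)"
    using DERIV_neg_dec_right[OF d] by force
  define h where "h = min (e/2) ((1 - t)/2)"
  have h1: "h \<le> (1 - t)/2" "h \<le> e/2" unfolding h_def by (rule min.cobounded2, rule min.cobounded1)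
  have h2: "h > 0" using e t by (simp add: h_def)
  have h3: "2 * h \<le> 1 - t" "2 * h \<le> e" using h1 by (simp_all add: field_simps)
  have h: "h > 0" "h < e" "t + h \<le> 1" using h3 h2 e(1) t by linarith+
  then have "f t > f (t + h)" using e by blast
  moreover have "f t \<le> f (t + h)" using mono[of t "t + h"] h t by auto
  ultimately show False by simp
qed

lemma deriv_nonpos_of_anti:
  fixes f :: "real \<Rightarrow> real"
  assumes d: "(f has_real_derivative D) (at t)" and t: "0 < t" "t < 1"
    and anti: "\<And>s u. 0 < s \<Longrightarrow> s \<le> u \<Longrightarrow> u \<le> 1 \<Longrightarrow> f u \<le> f s"
  shows "D \<le> 0"
proof (rule ccontr)
  assume "\<not> D \<le> 0"
  then obtain e where e: "e > 0" "\<forall>h>0. h < e \<longrightarrow> f t < f (t + h)"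
    using DERIV_pos_inc_right[OF d] by force
  define h where "h = min (e/2) ((1 - t)/2)"
  have h1: "h \<le> (1 - t)/2" "h \<le> e/2" unfolding h_def by (rule min.cobounded2, rule min.cobounded1)
  have h2: "h > 0" using e t by (simp add: h_def)
  have h3: "2 * h \<le> 1 - t" "2 * h \<le> e" using h1 by (simp_all add: field_simps)
  have h: "h > 0" "h < e" "t + h \<le> 1" using h3 h2 e(1) t by linarith+
  then have "f t < f (t + h)" using e by blast
  moreover have "f (t + h) \<le> f t" using anti[of t "t + h"] h t by auto
  ultimately show False by simp
qed

lemma set_integral_not_integrable:
  "\<not> set_integrable M A f \<Longrightarrow> set_lebesgue_integral M A (f :: _ \<Rightarrow> real) = 0"
  unfolding set_integrable_def set_lebesgue_integral_def by (rule not_integrable_integral_eq)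

lemma ae_zero_of_integral:
  fixes k :: "real \<Rightarrow> real"
  assumes int: "(k has_integral 0) S" and nn: "\<And>t. t \<in> S \<Longrightarrow> 0 \<le> k t"
  shows "\<exists>N. negligible N \<and> (\<forall>t\<in>S - N. k t = 0)"
proof -
  have ai: "k absolutely_integrable_on S"
    by (rule nonnegative_absolutely_integrable_1[OF has_integral_integrable[OF int] nn])
  have "(LINT t:S|lebesgue. k t) = integral S k" by (rule set_lebesgue_integral_eq_integral(2)[OF ai])
  also have "\<dots> = 0" using int by (rule integral_unique)
  finally have "integral\<^sup>L lebesgue (\<lambda>t. indicator S t *\<^sub>R k t) = 0"
    unfolding set_lebesgue_integral_def .
  moreover have "integrable lebesgue (\<lambda>t. indicator S t *\<^sub>R k t)"
    using ai unfolding set_integrable_def .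
  moreover have "AE t in lebesgue. 0 \<le> indicator S t *\<^sub>R k t"
    using nn by (intro AE_I2) (auto simp: indicator_def)
  ultimately have "AE t in lebesgue. indicator S t *\<^sub>R k t = 0"
    using integral_nonneg_eq_0_iff_AE by blast
  then obtain N where N: "{t \<in> space lebesgue. \<not> indicator S t *\<^sub>R k t = 0} \<subseteq> N"
    "emeasure lebesgue N = 0" "N \<in> sets lebesgue" by (rule AE_E)
  have "negligible N" unfolding negligible_iff_null_sets using N(2,3) by (simp add: null_setsI)
  moreover have "\<forall>t\<in>S - N. k t = 0" using N(1) by (auto simp: indicator_def)
  ultimately show ?thesis by blast
qed

theorem mainTheorem4:
  fixes \<delta> :: "real \<Rightarrow> real"
  assumes "copD_LSL \<delta>"
  shows "(\<forall>x\<in>{0..1}. star \<delta> \<delta> x = \<delta> x) \<longleftrightarrow>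
         (\<exists>a\<in>{0..1}. \<forall>x\<in>{0..1}. \<delta> x = ua a x)"
proof -
  note lsl = assms
  define g where "g = gg \<delta>"
  have g_eq: "(\<lambda>t. \<delta> t / t) = g" by (simp add: fun_eq_iff g_def gg_def)
  have g_app: "g t = \<delta> t / t" for t by (simp add: g_def gg_def)
  define H where "H u = deriv g u * deriv g u" for u
  have H_nn: "0 \<le> H u" for u by (simp add: H_def)
  define L where "L x = (LINT u:{x..1}|lebesgue. H u)" for x
  have star_eq: "star \<delta> \<delta> x = (1/x) * \<delta> x * \<delta> x + x\<^sup>2 * L x" if "x \<noteq> 0" for x
  proof -
    have "(\<lambda>u. deriv g u * deriv g u) = H" by (simp add: fun_eq_iff H_def)
    then show ?thesis using that by (simp add: star_def g_eq L_def)
  qed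
  have d_xg: "\<delta> t = t * g t" if "t > 0" for t using that by (simp add: g_app)
  have L_int: "L x = integral {x..1} H" if "H absolutely_integrable_on {x..1}" for x
    unfolding L_def by (rule set_lebesgue_integral_eq_integral(2)[OF that])
  show ?thesis
  proof
    assume eq: "\<forall>x\<in>{0..1}. star \<delta> \<delta> x = \<delta> x"
    have key: "g t * (1 - g t) = t * L t" if t: "0 < t" "t \<le> 1" for t
    proof -
      have "\<delta> t = (1/t) * \<delta> t * \<delta> t + t\<^sup>2 * L t" using eq t star_eq[of t] by auto
      then have "t * g t = (1/t) * (t * g t) * (t * g t) + t\<^sup>2 * L t" using d_xg[OF t(1)] by simp
      then have "t * g t = t * (g t * g t + t * L t)" using t by (simp add: field_simps power2_eq_square)
      then have "g t = g t * g t + t * L t" using t by simp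
      then show ?thesis by (simp add: algebra_simps)
    qed
    show "\<exists>a\<in>{0..1}. \<forall>x\<in>{0..1}. \<delta> x = ua a x"
    proof (cases "\<forall>t. 0 < t \<and> t \<le> 1 \<longrightarrow> g t = 1")
      case True
      show ?thesis
      proof (intro bexI[of _ 0] ballI)
        fix x :: real assume x: "x \<in> {0..1}"
        show "\<delta> x = ua 0 x"
        proof (cases "x = 0")
          case True then show ?thesis using d_zero[OF lsl] by (simp add: ua_def)
        next
          case False
          then have "0 < x" using x by auto
          then show ?thesis using True d_xg[of x] x by (simp add: ua_def)
        qed
      qed simp
    next
      case False
      then obtain x0 where x0: "0 < x0" "x0 \<le> 1" "g x0 \<noteq> 1" by blast
      have gle1: "g t \<le> 1" if "0 < t" "t \<le> 1" for t using gg_le1[OF lsl that] by (simp add: g_def)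
      have gpos: "0 < g t" if "0 < t" "t \<le> 1" for t using gg_pos[OF lsl that] by (simp add: g_def)
      have gge: "t \<le> g t" if "0 < t" "t \<le> 1" for t using gg_ge[OF lsl that] by (simp add: g_def)
      have gmono: "g s \<le> g t" if "0 < s" "s \<le> t" "t \<le> 1" for s t
        using gg_mono[OF lsl that] by (simp add: g_def)
      have ganti: "g t / t \<le> g s / s" if "0 < s" "s \<le> t" "t \<le> 1" for s t
        using gg_anti[OF lsl that] by (simp add: g_def)
      have g1: "g 1 = 1" using gg_one[OF lsl] by (simp add: g_def)
      have gx0: "g x0 < 1" using x0 gle1[OF x0(1,2)] by simp
      define A where "A = {t \<in> {x0..1}. g t = 1}"
      have clA: "closed A" unfolding A_def
        by (rule continuous_closed_preimage_constant) (use gg_cont[OF lsl x0(1,2)] in \<open>auto simp: g_def\<close>)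
      have A1: "1 \<in> A" using x0 g1 by (simp add: A_def)
      have Abdd: "bdd_below A" unfolding A_def by (rule bdd_belowI[of _ x0]) auto
      define a where "a = Inf A"
      have aA: "a \<in> A" unfolding a_def using closed_contains_Inf[OF _ Abdd clA] A1 by blast
      have a_le1: "a \<le> 1" and x0a: "x0 \<le> a" and ga: "g a = 1" using aA by (auto simp: A_def)
      have x0lta: "x0 < a" using x0a ga gx0 by (cases "x0 = a") auto
      have a_pos: "0 < a" using x0(1) x0lta by simp
      have g_above: "g t = 1" if "a \<le> t" "t \<le> 1" for t
        using gmono[OF a_pos that] ga gle1[of t] that a_pos by simp
      have g_below: "g t < 1" if "0 < t" "t < a" for t
      proof (cases "x0 \<le> t")
        case True
        have "g t \<noteq> 1"
        proof
          assume "g t = 1"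
          then have "t \<in> A" using True that a_le1 by (simp add: A_def)
          then have "a \<le> t" unfolding a_def by (rule cInf_lower[OF _ Abdd])
          then show False using that by simp
        qed
        then show ?thesis using gle1[of t] that a_le1 by simp
      next
        case False
        then show ?thesis using gmono[of t x0] that x0 gx0 by simp
      qed
      have H_zero: "H u = 0" if "a < u" "u < 1" for u
      proof -
        have "(g has_real_derivative 0) (at u)"
          by (rule has_field_derivative_transform_within_open[of "\<lambda>_. 1" _ _ "{a<..<1}"])
             (use that g_above in auto)
        then show ?thesis by (simp add: H_def DERIV_imp_deriv)
      qed
      have core: "g x = x / a" if x: "0 < x" "x < a" for x
      proof -
        have x1: "x \<le> 1" using x a_le1 by simp
        have gx: "0 < g x" "g x < 1" using gpos[OF x(1) x1] g_below[OF x] by auto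
        have Lpos: "L x \<noteq> 0"
        proof
          assume "L x = 0"
          then have "g x * (1 - g x) = 0" using key[OF x(1) x1] by simp
          then show False using gx by simp
        qed
        have Hai: "H absolutely_integrable_on {x..1}"
          using Lpos set_integral_not_integrable unfolding L_def by blast
        have Hi1: "H integrable_on {x..1}" using Hai set_lebesgue_integral_eq_integral(1) by blast
        have Hia: "H integrable_on {x..a}" by (rule integrable_on_subinterval[OF Hi1]) (use a_le1 in auto)
        define I1 where "I1 = integral {x..a} H"
        have HI1: "(H has_integral I1) {x..a}" using Hia by (simp add: I1_def integrable_integral)
        have H0: "(H has_integral 0) {a..1}"
          by (rule has_integral_spike_finite[where S="{a, 1}" and f="\<lambda>_. 0"]) (use H_zero in auto)
        have "(H has_integral I1 + 0) {x..1}"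
          by (rule has_integral_combine[OF _ _ HI1 H0]) (use x a_le1 in auto)
        then have "integral {x..1} H = I1" by (simp add: integral_unique)
        then have LI1: "L x = I1" using L_int[OF Hai] by simp
        define \<Phi> where "\<Phi> t = g t * (1 - g t) / t" for t
        define \<psi> where "\<psi> t = g t / t" for t
        have I1\<Phi>: "I1 = \<Phi> x" using key[OF x(1) x1] LI1 x by (simp add: \<Phi>_def field_simps)
        have \<Phi>a: "\<Phi> a = 0" using ga by (simp add: \<Phi>_def)
        have \<psi>a: "\<psi> a = 1 / a" using ga by (simp add: \<psi>_def)
        obtain N where N: "negligible N" "\<And>t. t \<in> {x<..<1} \<Longrightarrow> t \<notin> N \<Longrightarrow> g differentiable (at t)"
          using gg_diff_ae[OF lsl x(1) x1] unfolding g_def by blast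
        have glip: "\<bar>g s - g t\<bar> \<le> (1/x) * \<bar>s - t\<bar>" if "s \<in> {x..a}" "t \<in> {x..a}" for s t
          using gg_lip[OF lsl x(1)] that a_le1 by (simp add: g_def)
        have gb: "\<bar>g t\<bar> \<le> 1" "\<bar>1 - g t\<bar> \<le> 1" "\<bar>g t * (1 - g t)\<bar> \<le> 1" if "t \<in> {x..a}" for t
        proof -
          have "0 < g t" "g t \<le> 1" using gpos[of t] gle1[of t] that x a_le1 by auto
          then show "\<bar>g t\<bar> \<le> 1" "\<bar>1 - g t\<bar> \<le> 1" "\<bar>g t * (1 - g t)\<bar> \<le> 1"
            by (auto simp: abs_mult intro: mult_le_one)
        qed
        have ib: "\<bar>1 / t\<bar> \<le> 1 / x" if "t \<in> {x..a}" for t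
          using that x by (auto simp: frac_le)
        have ilip: "\<bar>1 / s - 1 / t\<bar> \<le> (1 / x\<^sup>2) * \<bar>s - t\<bar>" if "s \<in> {x..a}" "t \<in> {x..a}" for s t
          using lip_inverse[of x s t] x that by auto
        have omglip: "\<bar>(1 - g s) - (1 - g t)\<bar> \<le> (1/x) * \<bar>s - t\<bar>" if "s \<in> {x..a}" "t \<in> {x..a}" for s t
          using glip[OF that] by simp
        have g2lip: "\<bar>g s * (1 - g s) - g t * (1 - g t)\<bar> \<le> (1 * (1/x) + (1/x) * 1) * \<bar>s - t\<bar>"
          if "s \<in> {x..a}" "t \<in> {x..a}" for s t
          by (rule lip_mul[OF glip[OF that] omglip[OF that] gb(1)[OF that(1)] gb(2)[OF that(2)]]) auto
        have \<Phi>lip: "\<bar>\<Phi> s - \<Phi> t\<bar> \<le> (1 * (1/x\<^sup>2) + (1 * (1/x) + (1/x) * 1) * (1/x)) * \<bar>s - t\<bar>"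
          if "s \<in> {x..a}" "t \<in> {x..a}" for s t
        proof -
          have "\<bar>(g s * (1 - g s)) * (1/s) - (g t * (1 - g t)) * (1/t)\<bar>
              \<le> (1 * (1/x\<^sup>2) + (1 * (1/x) + (1/x) * 1) * (1/x)) * \<bar>s - t\<bar>"
            by (rule lip_mul[OF g2lip[OF that] ilip[OF that] gb(3)[OF that(1)] ib[OF that(2)]]) (use x in auto)
          then show ?thesis by (simp add: \<Phi>_def)
        qed
        have \<psi>lip: "\<bar>\<psi> s - \<psi> t\<bar> \<le> (1 * (1/x\<^sup>2) + (1/x) * (1/x)) * \<bar>s - t\<bar>"
          if "s \<in> {x..a}" "t \<in> {x..a}" for s t
        proof -
          have "\<bar>g s * (1/s) - g t * (1/t)\<bar> \<le> (1 * (1/x\<^sup>2) + (1/x) * (1/x)) * \<bar>s - t\<bar>"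
            by (rule lip_mul[OF glip[OF that] ilip[OF that] gb(1)[OF that(1)] ib[OF that(2)]]) (use x in auto)
          then show ?thesis by (simp add: \<psi>_def)
        qed
        have good: "(g has_real_derivative deriv g t) (at t)
                \<and> (\<Phi> has_real_derivative (deriv g t * (1 - 2 * g t) * t - g t * (1 - g t)) / t\<^sup>2) (at t)
                \<and> (\<psi> has_real_derivative (t * deriv g t - g t) / t\<^sup>2) (at t)
                \<and> 0 \<le> deriv g t \<and> t * deriv g t - g t \<le> 0"
          if t: "t \<in> {x<..<a}" "t \<notin> N" for t
        proof -
          have t0: "0 < t" "t < 1" using t x a_le1 by auto
          have dg: "(g has_real_derivative deriv g t) (at t)"
            using N(2)[of t] t a_le1 by (simp add: DERIV_deriv_iff_real_differentiable)
          define g' where "g' = deriv g t"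
          have dg': "(g has_real_derivative g') (at t)" using dg by (simp add: g'_def)
          have d1: "((\<lambda>t. 1 - g t) has_real_derivative 0 - g') (at t)"
            by (rule DERIV_diff[OF DERIV_const dg'])
          have d2: "((\<lambda>t. g t * (1 - g t)) has_real_derivative g' * (1 - g t) + (0 - g') * g t) (at t)"
            by (rule DERIV_mult[OF dg' d1])
          have d\<Phi>0: "((\<lambda>t. g t * (1 - g t) / t) has_real_derivative
                ((g' * (1 - g t) + (0 - g') * g t) * t - g t * (1 - g t) * 1) / (t * t)) (at t)"
            by (rule DERIV_divide[OF d2 DERIV_ident]) (use t0 in simp)
          have e\<Phi>: "((g' * (1 - g t) + (0 - g') * g t) * t - g t * (1 - g t) * 1) / (t * t)
              = (g' * (1 - 2 * g t) * t - g t * (1 - g t)) / t\<^sup>2"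
            by (simp add: power2_eq_square algebra_simps)
          have d\<psi>0: "((\<lambda>t. g t / t) has_real_derivative (g' * t - g t * 1) / (t * t)) (at t)"
            by (rule DERIV_divide[OF dg' DERIV_ident]) (use t0 in simp)
          have e\<psi>: "(g' * t - g t * 1) / (t * t) = (t * g' - g t) / t\<^sup>2"
            by (simp add: power2_eq_square algebra_simps)
          have \<Phi>f: "\<Phi> = (\<lambda>t. g t * (1 - g t) / t)" by (simp add: fun_eq_iff \<Phi>_def)
          have \<psi>f: "\<psi> = (\<lambda>t. g t / t)" by (simp add: fun_eq_iff \<psi>_def)
          have d\<psi>: "(\<psi> has_real_derivative (t * g' - g t) / t\<^sup>2) (at t)"
            using d\<psi>0 unfolding e\<psi> \<psi>f .
          have pos: "0 \<le> g'"
            by (rule deriv_nonneg_of_mono[OF dg' t0]) (use gmono in auto)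
          have neg: "(t * g' - g t) / t\<^sup>2 \<le> 0"
            by (rule deriv_nonpos_of_anti[OF d\<psi> t0]) (use ganti \<psi>_def in auto)
          then have neg': "t * g' - g t \<le> 0" using t0 by (simp add: divide_le_0_iff)
          have d\<Phi>: "(\<Phi> has_real_derivative (g' * (1 - 2 * g t) * t - g t * (1 - g t)) / t\<^sup>2) (at t)"
            using d\<Phi>0 unfolding e\<Phi> \<Phi>f .
          show ?thesis using dg d\<Phi> d\<psi> pos neg' unfolding g'_def by blast
        qed
        have ftc\<Phi>: "(deriv \<Phi> has_integral (\<Phi> a - \<Phi> x)) {x..a}"
        proof (rule ftc_lipschitz[OF _ _ \<Phi>lip N(1)])
          fix t assume "t \<in> {x<..<a}" "t \<notin> N"
          then show "\<Phi> differentiable (at t)" using good real_differentiable_def by blast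
        qed (use x in auto)
        have ftc\<psi>: "(deriv \<psi> has_integral (\<psi> a - \<psi> x)) {x..a}"
        proof (rule ftc_lipschitz[OF _ _ \<psi>lip N(1)])
          fix t assume "t \<in> {x<..<a}" "t \<notin> N"
          then show "\<psi> differentiable (at t)" using good real_differentiable_def by blast
        qed (use x in auto)
        define k where "k t = - (H t + deriv \<Phi> t)" for t
        have kint: "(k has_integral 0) {x..a}"
        proof -
          have "((\<lambda>t. H t + deriv \<Phi> t) has_integral (\<Phi> x + (\<Phi> a - \<Phi> x))) {x..a}"
            using has_integral_add[OF HI1[unfolded I1\<Phi>] ftc\<Phi>] .
          then have "((\<lambda>t. - (H t + deriv \<Phi> t)) has_integral - (\<Phi> x + (\<Phi> a - \<Phi> x))) {x..a}"
            by (rule has_integral_neg)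
          moreover have "k = (\<lambda>t. - (H t + deriv \<Phi> t))" by (simp add: fun_eq_iff k_def)
          ultimately show ?thesis using \<Phi>a by simp
        qed
        define S where "S = {x<..<a} - N"
        have negS: "negligible ({x..a} - S)"
        proof -
          have "{x..a} - S \<subseteq> {x, a} \<union> N" by (auto simp: S_def)
          moreover have "negligible ({x, a} \<union> N)" using N(1) by simp
          ultimately show ?thesis by (rule negligible_subset[rotated])
        qed
        have k_form: "k t = - ((t * deriv g t - g t) * (t * deriv g t + 1 - g t)) / t\<^sup>2
                \<and> 0 \<le> k t \<and> 0 < t * deriv g t + 1 - g t" if "t \<in> S" for t
        proof -
          have t: "t \<in> {x<..<a}" "t \<notin> N" using that by (auto simp: S_def)
          have t0: "0 < t" "t < a" using t x by auto
          note gd = good[OF t]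
          have "deriv \<Phi> t = (deriv g t * (1 - 2 * g t) * t - g t * (1 - g t)) / t\<^sup>2"
            using gd by (simp add: DERIV_imp_deriv)
          then have kf: "k t = - ((t * deriv g t - g t) * (t * deriv g t + 1 - g t)) / t\<^sup>2"
            using t0 by (simp add: k_def H_def field_simps power2_eq_square)
          have p1: "t * deriv g t - g t \<le> 0" using gd by simp
          have "0 \<le> deriv g t" using gd by blast
          then have "0 \<le> t * deriv g t" using t0 by simp
          then have p2: "0 < t * deriv g t + 1 - g t"
            using g_below[OF t0] t0 by linarith
          have "0 \<le> - ((t * deriv g t - g t) * (t * deriv g t + 1 - g t))"
            using p1 p2 by (simp add: mult_nonpos_nonneg)
          then have "0 \<le> - ((t * deriv g t - g t) * (t * deriv g t + 1 - g t)) / t\<^sup>2"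
            by (rule divide_nonneg_nonneg) simp
          then have "0 \<le> k t" using kf by (simp only:)
          then show ?thesis using kf p2 by simp
        qed
        have spk: "negligible {t \<in> {x..a} - S. k t \<noteq> 0}" "negligible {t \<in> S - {x..a}. k t \<noteq> 0}"
        proof -
          show "negligible {t \<in> {x..a} - S. k t \<noteq> 0}" by (rule negligible_subset[OF negS]) auto
          have "{t \<in> S - {x..a}. k t \<noteq> 0} = {}" by (auto simp: S_def)
          then show "negligible {t \<in> S - {x..a}. k t \<noteq> 0}" by (simp only: negligible_empty)
        qed
        have kS: "(k has_integral 0) S" using kint has_integral_spike_set_eq[OF spk] by blast
        obtain N2 where N2: "negligible N2" "\<And>t. t \<in> S - N2 \<Longrightarrow> k t = 0"
          using ae_zero_of_integral[OF kS] k_form by blast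
        have d\<psi>0: "deriv \<psi> t = 0" if "t \<in> S - N2" for t
        proof -
          have tS: "t \<in> S" using that by simp
          have t: "t \<in> {x<..<a}" "t \<notin> N" using tS by (auto simp: S_def)
          have t0: "0 < t" using t x by auto
          have "k t = 0" using N2(2) that by blast
          then have "(t * deriv g t - g t) * (t * deriv g t + 1 - g t) = 0"
            using k_form[OF tS] t0 by simp
          then have "t * deriv g t - g t = 0" using k_form[OF tS] by simp
          moreover have "deriv \<psi> t = (t * deriv g t - g t) / t\<^sup>2"
            using good[OF t] by (simp add: DERIV_imp_deriv)
          ultimately show ?thesis by simp
        qed
        have "((\<lambda>_. 0) has_integral (\<psi> a - \<psi> x)) {x..a}"
        proof (rule has_integral_spike[OF _ _ ftc\<psi>])
          show "negligible (({x..a} - S) \<union> N2)" using negS N2(1) by simp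
        next
          fix t assume "t \<in> {x..a} - (({x..a} - S) \<union> N2)"
          then have "t \<in> S - N2" by auto
          then show "0 = deriv \<psi> t" using d\<psi>0 by simp
        qed
        then have "\<psi> a - \<psi> x = 0" by simp
        then have "g x / x = 1 / a" using \<psi>a by (simp add: \<psi>_def)
        then show ?thesis using x by (simp add: field_simps)
      qed
      show ?thesis
      proof (intro bexI[of _ a] ballI)
        fix x :: real assume x: "x \<in> {0..1}"
        show "\<delta> x = ua a x"
        proof (cases "x = 0")
          case True then show ?thesis using d_zero[OF lsl] a_pos by (simp add: ua_def)
        next
          case False
          then have x0': "0 < x" using x by auto
          show ?thesis
          proof (cases "x < a")
            case True
            then show ?thesis using core[OF x0' True] d_xg[OF x0'] by (simp add: ua_def power2_eq_square)
          next
            case False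
            then have "g x = 1" using g_above x by simp
            then show ?thesis using d_xg[OF x0'] False a_pos by (auto simp: ua_def power2_eq_square)
          qed
        qed
      qed (use a_pos a_le1 in auto)
    qed
  next
    assume "\<exists>a\<in>{0..1}. \<forall>x\<in>{0..1}. \<delta> x = ua a x"
    then obtain a where a: "0 \<le> a" "a \<le> 1" and da: "\<And>x. x \<in> {0..1} \<Longrightarrow> \<delta> x = ua a x" by auto
    show "\<forall>x\<in>{0..1}. star \<delta> \<delta> x = \<delta> x"
    proof
      fix x :: real assume x: "x \<in> {0..1}"
      show "star \<delta> \<delta> x = \<delta> x"
      proof (cases "x = 0")
        case True
        then show ?thesis using d_zero[OF lsl] by (simp add: star_def)
      next
        case False
        then have x0: "0 < x" "x \<le> 1" using x by auto
        have H_lo: "H u = 1 / a\<^sup>2" if "0 < u" "u < a" for u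
        proof -
          have "((\<lambda>t. t / a) has_real_derivative 1 / a) (at u)"
            using that by (auto intro!: derivative_eq_intros)
          then have "(g has_real_derivative 1 / a) (at u)"
          proof (rule has_field_derivative_transform_within_open[of _ _ _ "{0<..<a}"])
            fix t assume t: "t \<in> {0<..<a}"
            then have "\<delta> t = t\<^sup>2 / a" using da[of t] a by (simp add: ua_def)
            then show "t / a = g t" using t by (simp add: g_app power2_eq_square)
          qed (use that in auto)
          then show ?thesis by (simp add: H_def DERIV_imp_deriv power2_eq_square)
        qed
        have H_hi: "H u = 0" if "a < u" "u < 1" for u
        proof -
          have "(g has_real_derivative 0) (at u)"
          proof (rule has_field_derivative_transform_within_open[of "\<lambda>_. 1" _ _ "{a<..<1}"])
            fix t assume t: "t \<in> {a<..<1}"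
            then have "\<delta> t = t" using da[of t] a by (simp add: ua_def)
            then show "1 = g t" using t a by (simp add: g_app)
          qed (use that in auto)
          then show ?thesis by (simp add: H_def DERIV_imp_deriv)
        qed
        show ?thesis
        proof (cases "x < a")
          case True
          have I1: "(H has_integral (a - x) * (1 / a\<^sup>2)) {x..a}"
          proof (rule has_integral_spike_finite[where S="{a}" and f="\<lambda>_. 1 / a\<^sup>2"])
            show "((\<lambda>_. 1 / a\<^sup>2) has_integral (a - x) * (1 / a\<^sup>2)) {x..a}"
              using has_integral_const_real[of "1 / a\<^sup>2" x a] True by simp
          qed (use H_lo x0 in auto)
          have I2: "(H has_integral 0) {a..1}"
            by (rule has_integral_spike_finite[where S="{a, 1}" and f="\<lambda>_. 0"]) (use H_hi in auto)
          have "(H has_integral (a - x) * (1 / a\<^sup>2) + 0) {x..1}"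
            by (rule has_integral_combine[OF _ _ I1 I2]) (use True a in auto)
          then have HI: "(H has_integral (a - x) * (1 / a\<^sup>2)) {x..1}" by simp
          have "H absolutely_integrable_on {x..1}"
            by (rule nonnegative_absolutely_integrable_1[OF has_integral_integrable[OF HI] H_nn])
          then have Lx: "L x = (a - x) * (1 / a\<^sup>2)" using L_int HI integral_unique by metis
          have dx: "\<delta> x = x\<^sup>2 / a" using da[OF x] True by (simp add: ua_def)
          have apos: "0 < a" using True x0 by simp
          have "star \<delta> \<delta> x = (1/x) * (x\<^sup>2 / a) * (x\<^sup>2 / a) + x\<^sup>2 * ((a - x) * (1 / a\<^sup>2))"
            using star_eq[OF False] Lx dx by simp
          also have "\<dots> = x\<^sup>2 / a" using x0 apos by (simp add: field_simps power2_eq_square)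
          finally show ?thesis using dx by simp
        next
          case False
          have HI: "(H has_integral 0) {x..1}"
            by (rule has_integral_spike_finite[where S="{x, 1}" and f="\<lambda>_. 0"]) (use H_hi False in auto)
          have "H absolutely_integrable_on {x..1}"
            by (rule nonnegative_absolutely_integrable_1[OF has_integral_integrable[OF HI] H_nn])
          then have "L x = 0" using L_int HI integral_unique by metis
          moreover have "\<delta> x = x"
          proof -
            have "\<delta> x = ua a x" using da[OF x] .
            then show ?thesis using False x0 by (cases "x = a") (auto simp: ua_def power2_eq_square)
          qed
          ultimately show ?thesis using star_eq[OF \<open>x \<noteq> 0\<close>] x0 by (simp add: power2_eq_square)
        qed
      qed
    qed
  qed
qed

end
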